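(* If $G$ is a special grid operator and $k\in\mathbb Z$, then $G'=\sigma^kG\sigma^k$ is a special grid operator and moreover $G'^{\bullet}=(-\tau)^kG^\bullet\tau^k$.
   Context: Let $\omega=e^{i\pi/4}$, $\lambda=1+\sqrt2$, and $\mathbb Z[\omega]=\{a_0+a_1\omega+a_2\omega^2+a_3\omega^3: a_j\in\mathbb Z\}\subseteq\mathbb C\cong\mathbb R^2$. A grid operator is a real linear map $G:\mathbb R^2\to\mathbb R^2$ with $G(\mathbb Z[\omega])\subseteq\mathbb Z[\omega]$ (its entries lie in $\mathbb Q(\sqrt2)$); it is special if $\det G=\pm1$. For a matrix $M$ with entries in $\mathbb Q(\sqrt2)$, $M^\bullet$ is obtained by applying $(x+y\sqrt2)^\bullet=x-y\sqrt2$ to each entry. Let $\sigma=\sqrt{\lambda^{-1}}\begin{bmatrix}\lambda&0\\0&1\end{bmatrix}$ and $\tau=\sqrt{\lambda^{-1}}\begin{bmatrix}1&0\\0&-\lambda\end{bmatrix}$. *)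

theory Defs
  imports "HOL-Analysis.Analysis"
begin

definition omega :: complex where "omega = cis (pi / 4)"
definition lam :: real where "lam = 1 + sqrt 2"

definition Zomega :: "complex set" where
  "Zomega = {of_int a0 + of_int a1 * omega + of_int a2 * omega ^ 2 + of_int a3 * omega ^ 3
             | a0 a1 a2 a3 :: int. True}"

definition c2v :: "complex \<Rightarrow> real^2" where
  "c2v z = vector [Re z, Im z]"

definition grid_operator :: "real^2^2 \<Rightarrow> bool" where
  "grid_operator G \<longleftrightarrow> (\<forall>z\<in>Zomega. \<exists>w\<in>Zomega. G *v c2v z = c2v w)"

definition special_grid_operator :: "real^2^2 \<Rightarrow> bool" where
  "special_grid_operator G \<longleftrightarrow> grid_operator G \<and> (det G = 1 \<or> det G = -1)"

text \<open>sqrt 2-conjugation on Q(sqrt 2): (x + y sqrt 2)^bullet = x - y sqrt 2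
  (unique representation since sqrt 2 is irrational); identity outside Q(sqrt 2).\<close>
definition bul :: "real \<Rightarrow> real" where
  "bul r = (if \<exists>x y :: rat. r = of_rat x + of_rat y * sqrt 2
            then (THE s. \<exists>x y :: rat. r = of_rat x + of_rat y * sqrt 2 \<and> s = of_rat x - of_rat y * sqrt 2)
            else r)"

definition mat_bul :: "real^2^2 \<Rightarrow> real^2^2" where
  "mat_bul M = (\<chi> i j. bul (M $ i $ j))"

fun mat_pow :: "real^2^2 \<Rightarrow> nat \<Rightarrow> real^2^2" where
  "mat_pow M 0 = mat 1"
| "mat_pow M (Suc n) = M ** mat_pow M n"

definition mat_zpow :: "real^2^2 \<Rightarrow> int \<Rightarrow> real^2^2" where
  "mat_zpow M k = (if 0 \<le> k then mat_pow M (nat k) else mat_pow (matrix_inv M) (nat (- k)))"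

definition sigma :: "real^2^2" where
  "sigma = sqrt (inverse lam) *\<^sub>R vector [vector [lam, 0], vector [0, 1]]"

definition tau :: "real^2^2" where
  "tau = sqrt (inverse lam) *\<^sub>R vector [vector [1, 0], vector [0, - lam]]"

end

theory Submission
  imports Defs
begin


definition D :: "real \<Rightarrow> real \<Rightarrow> real^2^2" where
  "D x y = vector [vector [x,0], vector [0,y]]"

lemma D_nth[simp]: "D x y $ 1 $ 1 = x" "D x y $ 1 $ 2 = 0" "D x y $ 2 $ 1 = 0" "D x y $ 2 $ 2 = y"
  by (simp_all add: D_def)

lemma mat_eq2: "(A::real^2^2) = B \<longleftrightarrow> A$1$1 = B$1$1 \<and> A$1$2 = B$1$2 \<and> A$2$1 = B$2$1 \<and> A$2$2 = B$2$2"
  by (auto simp: vec_eq_iff forall_2)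

lemma mult2_nth[simp]: "((A::real^2^2) ** B) $ i $ j = A$i$1 * B$1$j + A$i$2 * B$2$j"
  by (simp add: matrix_matrix_mult_def sum_2)

lemma mat1_nth[simp]: "(mat 1 :: real^2^2) $ 1 $ 1 = 1" "(mat 1 :: real^2^2) $ 1 $ 2 = 0"
   "(mat 1 :: real^2^2) $ 2 $ 1 = 0" "(mat 1 :: real^2^2) $ 2 $ 2 = 1"
  by (simp_all add: mat_def)

lemma D_mult: "D x y ** D x' y' = D (x*x') (y*y')"
  by (simp add: mat_eq2)

lemma D_one: "D 1 1 = mat 1" by (simp add: mat_eq2)

lemma D_pow: "mat_pow (D x y) n = D (x^n) (y^n)"
  by (induction n) (simp_all add: D_one D_mult)

lemma D_inv: assumes "x \<noteq> 0" "y \<noteq> 0" shows "matrix_inv (D x y) = D (1/x) (1/y)"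
proof -
  let ?P = "\<lambda>A'. D x y ** A' = mat 1 \<and> A' ** D x y = mat 1"
  have p: "?P (D (1/x) (1/y))" using assms by (simp add: D_mult D_one)
  have u: "A' = D (1/x) (1/y)" if "?P A'" for A'
  proof -
    have "A' = A' ** (D x y ** D (1/x) (1/y))" using p by simp
    also have "\<dots> = (A' ** D x y) ** D (1/x) (1/y)" by (simp add: matrix_mul_assoc)
    also have "\<dots> = D (1/x) (1/y)" using that by simp
    finally show ?thesis .
  qed
  show ?thesis unfolding matrix_inv_def using someI[of ?P, OF p] u by blast
qed

lemma D_zpow: assumes "x \<noteq> 0" "y \<noteq> 0" shows "mat_zpow (D x y) k = D (x powi k) (y powi k)"
  using assms by (auto simp: mat_zpow_def D_pow D_inv power_int_def power_one_over inverse_eq_divide)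

lemma sigma_D: "sigma = D (sqrt (inverse lam) * lam) (sqrt (inverse lam))"
  by (simp add: mat_eq2 sigma_def)
lemma tau_D: "tau = D (sqrt (inverse lam)) (- sqrt (inverse lam) * lam)"
  by (simp add: mat_eq2 tau_def)
lemma mtau_D: "- tau = D (- sqrt (inverse lam)) (sqrt (inverse lam) * lam)"
  by (simp add: mat_eq2 tau_def)

lemma lam_pos: "lam > 0" by (simp add: lam_def add_pos_nonneg)



lemma s2': "sqrt 2 * (sqrt 2 * x) = 2*(x::real)" by (simp add: mult.assoc[symmetric])

lemma omega_eq: "omega = Complex (sqrt 2/2) (sqrt 2/2)"
  by (simp add: omega_def cis.ctr cos_45 sin_45)

lemma Re_omega[simp]: "Re omega = sqrt 2/2" by (simp add: omega_eq)
lemma Im_omega[simp]: "Im omega = sqrt 2/2" by (simp add: omega_eq)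

lemma omega2: "omega^2 = \<i>"
  by (simp add: omega_eq complex_eq_iff power2_eq_square)

lemma omega3: "omega^3 = Complex (- sqrt 2/2) (sqrt 2/2)"
  by (simp add: omega_eq complex_eq_iff power3_eq_cube)

lemma Zomega_iff: "z \<in> Zomega \<longleftrightarrow> (\<exists>(a0::int) (a1::int) (a2::int) (a3::int). Re z = real_of_int a0 + (real_of_int a1 - real_of_int a3)* sqrt 2/2 \<and> Im z = real_of_int a2 + (real_of_int a1 + real_of_int a3)* sqrt 2/2)"
proof
  assume "z \<in> Zomega"
  then obtain a0 a1 a2 a3 :: int where z: "z = of_int a0 + of_int a1 * omega + of_int a2 * omega ^ 2 + of_int a3 * omega ^ 3"
    unfolding Zomega_def by blast
  show "\<exists>(a0::int) (a1::int) (a2::int) (a3::int). Re z = real_of_int a0 + (real_of_int a1 - real_of_int a3)* sqrt 2/2 \<and> Im z = real_of_int a2 + (real_of_int a1 + real_of_int a3)* sqrt 2/2"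
    by (rule exI[of _ a0], rule exI[of _ a1], rule exI[of _ a2], rule exI[of _ a3])
       (simp add: z omega2 omega3 algebra_simps add_divide_distrib diff_divide_distrib)
next
  assume "\<exists>(a0::int) (a1::int) (a2::int) (a3::int). Re z = real_of_int a0 + (real_of_int a1 - real_of_int a3)* sqrt 2/2 \<and> Im z = real_of_int a2 + (real_of_int a1 + real_of_int a3)* sqrt 2/2"
  then obtain a0 a1 a2 a3 :: int where h: "Re z = real_of_int a0 + (real_of_int a1 - real_of_int a3)* sqrt 2/2" "Im z = real_of_int a2 + (real_of_int a1 + real_of_int a3)* sqrt 2/2" by blast
  have "z = of_int a0 + of_int a1 * omega + of_int a2 * omega ^ 2 + of_int a3 * omega ^ 3"
    by (simp add: complex_eq_iff h omega2 omega3 algebra_simps add_divide_distrib diff_divide_distrib)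
  then show "z \<in> Zomega" unfolding Zomega_def by blast
qed

lemma D_c2v: "D x y *v c2v z = c2v (Complex (x * Re z) (y * Im z))"
  by (simp add: c2v_def vec_eq_iff forall_2 matrix_vector_mult_def sum_2)

lemma grid_D: assumes "\<And>z. z \<in> Zomega \<Longrightarrow> Complex (x * Re z) (y * Im z) \<in> Zomega"
  shows "grid_operator (D x y)"
  using assms unfolding grid_operator_def D_c2v by blast

lemma grid_mult: "grid_operator A \<Longrightarrow> grid_operator B \<Longrightarrow> grid_operator (A ** B)"
  unfolding grid_operator_def by (metis matrix_vector_mul_assoc)

lemma grid_one: "grid_operator (mat 1)"
  unfolding grid_operator_def by auto

lemma grid_pow: "grid_operator A \<Longrightarrow> grid_operator (mat_pow A n)"
  by (induction n) (simp_all add: grid_one grid_mult)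

lemma lam_inv: "inverse lam = sqrt 2 - 1"
proof -
  have "lam * (sqrt 2 - 1) = 1" by (simp add: lam_def algebra_simps)
  thus ?thesis by (metis inverse_unique)
qed

lemma grid_D1: "grid_operator (D lam 1)"
proof (rule grid_D)
  fix z assume "z \<in> Zomega"
  then obtain a0 a1 a2 a3 :: int where h: "Re z = real_of_int a0 + (real_of_int a1 - real_of_int a3)* sqrt 2/2" "Im z = real_of_int a2 + (real_of_int a1 + real_of_int a3)* sqrt 2/2"
    by (auto simp: Zomega_iff)
  show "Complex (lam * Re z) (1 * Im z) \<in> Zomega" unfolding Zomega_iff
    apply (rule exI[of _ "a0+a1-a3"], rule exI[of _ "a1+a0"], rule exI[of _ a2], rule exI[of _ "a3-a0"])
    by (simp add: h lam_def field_simps s2')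
qed

lemma grid_D2: "grid_operator (D (inverse lam) 1)"
proof (rule grid_D)
  fix z assume "z \<in> Zomega"
  then obtain a0 a1 a2 a3 :: int where h: "Re z = real_of_int a0 + (real_of_int a1 - real_of_int a3)* sqrt 2/2" "Im z = real_of_int a2 + (real_of_int a1 + real_of_int a3)* sqrt 2/2"
    by (auto simp: Zomega_iff)
  show "Complex (inverse lam * Re z) (1 * Im z) \<in> Zomega" unfolding Zomega_iff
    apply (rule exI[of _ "a1-a3-a0"], rule exI[of _ "a0+a3"], rule exI[of _ a2], rule exI[of _ "a1-a0"])
    unfolding lam_inv by (simp add: h field_simps s2')
qed

lemma grid_D3: "grid_operator (D 1 lam)"
proof (rule grid_D)
  fix z assume "z \<in> Zomega"
  then obtain a0 a1 a2 a3 :: int where h: "Re z = real_of_int a0 + (real_of_int a1 - real_of_int a3)* sqrt 2/2" "Im z = real_of_int a2 + (real_of_int a1 + real_of_int a3)* sqrt 2/2"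
    by (auto simp: Zomega_iff)
  show "Complex (1 * Re z) (lam * Im z) \<in> Zomega" unfolding Zomega_iff
    apply (rule exI[of _ "a0"], rule exI[of _ "a1+a2"], rule exI[of _ "a2+a1+a3"], rule exI[of _ "a3+a2"])
    by (simp add: h lam_def field_simps s2')
qed

lemma grid_D4: "grid_operator (D 1 (inverse lam))"
proof (rule grid_D)
  fix z assume "z \<in> Zomega"
  then obtain a0 a1 a2 a3 :: int where h: "Re z = real_of_int a0 + (real_of_int a1 - real_of_int a3)* sqrt 2/2" "Im z = real_of_int a2 + (real_of_int a1 + real_of_int a3)* sqrt 2/2"
    by (auto simp: Zomega_iff)
  show "Complex (1 * Re z) (inverse lam * Im z) \<in> Zomega" unfolding Zomega_iff
    apply (rule exI[of _ "a0"], rule exI[of _ "a2-a3"], rule exI[of _ "a1+a3-a2"], rule exI[of _ "a2-a1"])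
    unfolding lam_inv by (simp add: h field_simps s2')
qed



lemma sqrt2_irr: "sqrt 2 \<notin> \<rat>"
proof
  assume "sqrt 2 \<in> \<rat>"
  then obtain m n :: nat where mn: "n \<noteq> 0" "\<bar>sqrt 2\<bar> = real m / real n" "coprime m n"
    by (rule Rats_abs_nat_div_natE)
  hence "sqrt 2 * real n = real m" using mn by (simp add: field_simps)
  hence "(sqrt 2 * real n)^2 = (real m)^2" by simp
  hence "2 * (real n)^2 = (real m)^2" by (simp add: power_mult_distrib)
  hence "real (2 * n^2) = real (m^2)" by simp
  hence e: "2 * n^2 = m^2" by (simp only: of_nat_eq_iff)
  hence "even (m^2)" by (metis dvd_triv_left)
  hence "even m" by simp
  then obtain k where k: "m = 2*k" by blast
  with e have "n^2 = 2*k^2" by (simp add: power_mult_distrib)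
  hence "even (n^2)" by (metis dvd_triv_left)
  hence "even n" by simp
  with \<open>even m\<close> mn(3) have "is_unit (2::nat)" by (metis coprime_common_divisor)
  thus False by simp
qed

definition Q2 :: "real set" where "Q2 = {r. \<exists>x y::rat. r = of_rat x + of_rat y * sqrt 2}"

lemma Q2_unique:
  assumes "of_rat x + of_rat y * sqrt 2 = of_rat x' + (of_rat y' * sqrt 2 :: real)"
  shows "x = x' \<and> y = y'"
proof -
  have "y = y'"
  proof (rule ccontr)
    assume "y \<noteq> y'"
    hence "sqrt 2 = of_rat ((x - x') / (y' - y))" using assms
      by (simp add: of_rat_divide of_rat_diff field_simps)
    thus False using sqrt2_irr by (metis Rats_of_rat)
  qed
  thus ?thesis using assms by simp
qed

lemma bul_eq: "bul (of_rat x + of_rat y * sqrt 2) = of_rat x - of_rat y * sqrt 2"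
proof -
  have "(THE s. \<exists>x' y' :: rat. of_rat x + of_rat y * sqrt 2 = of_rat x' + of_rat y' * sqrt 2 \<and> s = of_rat x' - of_rat y' * sqrt 2)
       = of_rat x - of_rat y * sqrt 2"
    by (rule the_equality) (auto dest: Q2_unique)
  thus ?thesis unfolding bul_def by auto
qed

lemma Q2_mult: assumes "u \<in> Q2" "v \<in> Q2" shows "u * v \<in> Q2 \<and> bul (u * v) = bul u * bul v"
proof -
  obtain x y x' y' where u: "u = of_rat x + of_rat y * sqrt 2" and v: "v = of_rat x' + of_rat y' * sqrt 2"
    using assms unfolding Q2_def by blast
  have uv: "u * v = of_rat (x*x' + 2*y*y') + of_rat (x*y' + x'*y) * sqrt 2"
    by (simp add: u v of_rat_add of_rat_mult algebra_simps s2')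
  show ?thesis
    unfolding uv Q2_def apply (intro conjI)
     apply blast
    unfolding bul_eq u v by (simp add: of_rat_add of_rat_mult algebra_simps s2')
qed

lemma lam_Q2: "lam \<in> Q2 \<and> bul lam = - inverse lam"
proof -
  have h: "lam = of_rat 1 + of_rat 1 * sqrt 2" by (simp add: lam_def)
  have "bul lam = of_rat 1 - of_rat 1 * sqrt 2" unfolding h by (rule bul_eq)
  moreover have "lam \<in> Q2" unfolding Q2_def using h by blast
  ultimately show ?thesis by (simp add: lam_inv)
qed

lemma ilam_Q2: "inverse lam \<in> Q2 \<and> bul (inverse lam) = - lam"
proof -
  have h: "inverse lam = of_rat (-1) + of_rat 1 * sqrt 2" by (simp add: lam_inv)
  have "bul (inverse lam) = of_rat (-1) - of_rat 1 * sqrt 2" unfolding h by (rule bul_eq)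
  moreover have "inverse lam \<in> Q2" unfolding Q2_def using h by blast
  ultimately show ?thesis by (simp add: lam_def)
qed

lemma lam_ne: "lam \<noteq> 0" using lam_pos by simp

lemma lampow_Q2: "lam powi k \<in> Q2 \<and> bul (lam powi k) = (- inverse lam) powi k"
proof (induction k rule: int_induct[where k = 0])
  case base
  have h: "(1::real) = of_rat 1 + of_rat 0 * sqrt 2" by simp
  have "bul 1 = of_rat 1 - of_rat 0 * sqrt 2" by (subst h, rule bul_eq)
  moreover have "(1::real) \<in> Q2" unfolding Q2_def using h by blast
  ultimately show ?case by simp
next
  case (step1 i)
  have e: "lam powi (i+1) = lam powi i * lam" "(- inverse lam) powi (i+1) = (- inverse lam) powi i * (- inverse lam)"
    using lam_ne by (simp_all add: power_int_add_1)
  show ?case unfolding e using Q2_mult[of "lam powi i" lam] step1.IH lam_Q2 by simp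
next
  case (step2 i)
  have e: "lam powi (i-1) = lam powi i * inverse lam" "(- inverse lam) powi (i-1) = (- inverse lam) powi i * (- lam)"
    using lam_ne by (simp_all add: power_int_diff field_simps)
  show ?case unfolding e using Q2_mult[of "lam powi i" "inverse lam"] step2.IH ilam_Q2 by simp
qed



lemma ZQ2: assumes "z \<in> Zomega" shows "Re z \<in> Q2" "Im z \<in> Q2"
proof -
  obtain a0 a1 a2 a3 :: int where h: "Re z = real_of_int a0 + (real_of_int a1 - real_of_int a3)* sqrt 2/2"
     "Im z = real_of_int a2 + (real_of_int a1 + real_of_int a3)* sqrt 2/2"
    using assms by (auto simp: Zomega_iff)
  have "Re z = of_rat (of_int a0) + of_rat ((of_int a1 - of_int a3)/2) * sqrt 2"
    by (simp add: h of_rat_divide of_rat_diff)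
  thus "Re z \<in> Q2" unfolding Q2_def by blast
  have "Im z = of_rat (of_int a2) + of_rat ((of_int a1 + of_int a3)/2) * sqrt 2"
    by (simp add: h of_rat_divide of_rat_add)
  thus "Im z \<in> Q2" unfolding Q2_def by blast
qed

lemma one_Z: "1 \<in> Zomega" unfolding Zomega_iff by (rule exI[of _ 1], rule exI[of _ 0], rule exI[of _ 0], rule exI[of _ 0]) simp
lemma i_Z: "\<i> \<in> Zomega" unfolding Zomega_iff by (rule exI[of _ 0], rule exI[of _ 0], rule exI[of _ 1], rule exI[of _ 0]) simp

lemma grid_entries: assumes "grid_operator G"
  shows "G$1$1 \<in> Q2" "G$1$2 \<in> Q2" "G$2$1 \<in> Q2" "G$2$2 \<in> Q2"
proof -
  obtain w where w: "w \<in> Zomega" "G *v c2v 1 = c2v w" using assms one_Z unfolding grid_operator_def by blast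
  obtain v where v: "v \<in> Zomega" "G *v c2v \<i> = c2v v" using assms i_Z unfolding grid_operator_def by blast
  have "G$1$1 = Re w" "G$2$1 = Im w" using w(2)
    by (simp_all add: c2v_def vec_eq_iff forall_2 matrix_vector_mult_def sum_2)
  thus "G$1$1 \<in> Q2" "G$2$1 \<in> Q2" using ZQ2[OF w(1)] by simp_all
  have "G$1$2 = Re v" "G$2$2 = Im v" using v(2)
    by (simp_all add: c2v_def vec_eq_iff forall_2 matrix_vector_mult_def sum_2)
  thus "G$1$2 \<in> Q2" "G$2$2 \<in> Q2" using ZQ2[OF v(1)] by simp_all
qed

lemma grid_Dl: "grid_operator (D (lam powi k) 1)"
proof (cases "k \<ge> 0")
  case True
  hence "D (lam powi k) 1 = mat_pow (D lam 1) (nat k)" by (simp add: D_pow power_int_def)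
  thus ?thesis using grid_pow grid_D1 by simp
next
  case False
  hence "D (lam powi k) 1 = mat_pow (D (inverse lam) 1) (nat (-k))" by (simp add: D_pow power_int_def)
  thus ?thesis using grid_pow grid_D2 by simp
qed

lemma grid_Dr: "grid_operator (D 1 (lam powi k))"
proof (cases "k \<ge> 0")
  case True
  hence "D 1 (lam powi k) = mat_pow (D 1 lam) (nat k)" by (simp add: D_pow power_int_def)
  thus ?thesis using grid_pow grid_D3 by simp
next
  case False
  hence "D 1 (lam powi k) = mat_pow (D 1 (inverse lam)) (nat (-k))" by (simp add: D_pow power_int_def)
  thus ?thesis using grid_pow grid_D4 by simp
qed

theorem lemma5p43:
  fixes G :: "real^2^2" and k :: int
  assumes "special_grid_operator G"
  shows "special_grid_operator (mat_zpow sigma k ** G ** mat_zpow sigma k)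
         \<and> mat_bul (mat_zpow sigma k ** G ** mat_zpow sigma k)
             = mat_zpow (- tau) k ** mat_bul G ** mat_zpow tau k"
proof -
  define s where "s = sqrt (inverse lam)"
  have spos: "s > 0" using lam_pos by (simp add: s_def)
  have ss: "s * s = inverse lam" using lam_pos by (simp add: s_def)
  have ln: "lam \<noteq> 0" using lam_pos by simp
  have sl1: "s * lam * s = 1" using ss ln by (simp add: algebra_simps)
  have f1: "(s*lam) powi k * (s*lam) powi k = lam powi k"
  proof -
    have "s*lam*(s*lam) = lam" using sl1 by (simp add: algebra_simps)
    thus ?thesis by (metis power_int_mult_distrib)
  qed
  have f2: "(s*lam) powi k * s powi k = 1" by (metis sl1 power_int_mult_distrib power_int_1_left)
  have f3: "s powi k * s powi k = lam powi (-k)"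
    by (metis ss power_int_mult_distrib power_int_inverse power_int_minus)
  have f4: "lam powi k * lam powi (-k) = 1" using ln by (simp add: power_int_minus)
  have g1: "(-s) powi k * s powi k = (- inverse lam) powi k"
    by (metis ss power_int_mult_distrib mult_minus_left)
  have g2: "(-s) powi k * (-s*lam) powi k = 1"
  proof -
    have "(-s) * (-s*lam) = 1" using sl1 by (simp add: algebra_simps)
    thus ?thesis by (metis power_int_mult_distrib power_int_1_left)
  qed
  have g3: "(s*lam) powi k * (-s*lam) powi k = (- inverse lam) powi (-k)"
  proof -
    have "(s*lam) * (-s*lam) = - lam" using sl1 by (simp add: algebra_simps)
    hence "(s*lam) powi k * (-s*lam) powi k = (-lam) powi k" by (metis power_int_mult_distrib)
    also have "\<dots> = (- inverse lam) powi (-k)"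
      by (simp add: power_int_minus power_int_inverse[symmetric])
    finally show ?thesis .
  qed
  have zs: "mat_zpow sigma k = D ((s*lam) powi k) (s powi k)"
    unfolding sigma_D s_def[symmetric] using spos ln by (simp add: D_zpow)
  have zt: "mat_zpow tau k = D (s powi k) ((-s*lam) powi k)"
    unfolding tau_D s_def[symmetric] using spos ln by (simp add: D_zpow)
  have zmt: "mat_zpow (-tau) k = D ((-s) powi k) ((s*lam) powi k)"
    unfolding mtau_D s_def[symmetric] using spos ln by (simp add: D_zpow)
  define M where "M = mat_zpow sigma k ** G ** mat_zpow sigma k"
  have Me: "M$1$1 = lam powi k * G$1$1" "M$1$2 = G$1$2" "M$2$1 = G$2$1" "M$2$2 = lam powi (-k) * G$2$2"
    unfolding M_def zs using f1 f2 f3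
    by (simp_all add: algebra_simps)
  have MD: "M = D (lam powi k) 1 ** G ** D 1 (lam powi (-k))"
    unfolding mat_eq2 using Me f4 by (simp add: algebra_simps)
  have gG: "grid_operator G" and dG: "det G = 1 \<or> det G = -1"
    using assms unfolding special_grid_operator_def by auto
  have "grid_operator M" unfolding MD using grid_mult grid_Dl grid_Dr gG by blast
  moreover have "det M = det G" unfolding det_2 Me using f4
    by (simp add: algebra_simps)
  ultimately have sp: "special_grid_operator M" using dG unfolding special_grid_operator_def by simp
  have Q: "G$1$1 \<in> Q2" "G$1$2 \<in> Q2" "G$2$1 \<in> Q2" "G$2$2 \<in> Q2" using grid_entries[OF gG] by auto
  have b1: "bul (lam powi k * G$1$1) = (- inverse lam) powi k * bul (G$1$1)"
    using Q2_mult[OF conjunct1[OF lampow_Q2[of k]] Q(1)] lampow_Q2[of k] by simp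
  have b2: "bul (lam powi (-k) * G$2$2) = (- inverse lam) powi (-k) * bul (G$2$2)"
    using Q2_mult[OF conjunct1[OF lampow_Q2[of "-k"]] Q(4)] lampow_Q2[of "-k"] by simp
  have "mat_bul M = mat_zpow (- tau) k ** mat_bul G ** mat_zpow tau k"
    unfolding mat_eq2 zt zmt mat_bul_def using Me b1 b2 g1 g2 g3 f2
    by (simp add: algebra_simps)
  with sp show ?thesis unfolding M_def by simp
qed

end
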